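(* Let $L\in\mathbb Z_{\ge1}$, $\delta>0$, $C>0$. For all $N\ge1$ and $z$ with $\mathrm{Re}(z)\le-\delta$, $|z|\le C$, $$-\chi(-z,N)=\frac{N}{z}\mathrm{Li}_2(e^{z})-\frac12\log(1-e^{z})+\sum_{\ell=2}^{L}\frac{B_\ell}{\ell!}\Big(\frac{z}{N}\Big)^{\ell-1}\mathrm{Li}_{2-\ell}(e^{z})+O\Big(\frac1{N^{L}}\Big),$$ with principal logarithm and an implied constant depending only on $L,\delta,C$.
   Context: For $\mathrm{Re}(w)>0$ and $t>0$, $\chi(w,t):=\sum_{r=1}^\infty\dfrac{e^{-rw}}{r(e^{rw/t}-1)}$. Polylogarithms: $\mathrm{Li}_s(u)=\sum_{n\ge1}u^n/n^s$ for $|u|<1$. $B_n$ are the Bernoulli numbers ($z/(e^z-1)=\sum B_nz^n/n!$). *)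

theory Defs
  imports "HOL-Analysis.Analysis" "HOL-Computational_Algebra.Formal_Power_Series"
begin

definition bernoulli :: "nat \<Rightarrow> real" where
  "bernoulli n = fact n * fps_nth (fps_X / (fps_exp 1 - 1)) n"

definition polylog :: "int \<Rightarrow> complex \<Rightarrow> complex" where
  "polylog s u = (\<Sum>n. u ^ Suc n / (of_nat (Suc n)) powi s)"

definition chi :: "complex \<Rightarrow> real \<Rightarrow> complex" where
  "chi w t = (\<Sum>r. exp (- of_nat (Suc r) * w) /
                 (of_nat (Suc r) * (exp (of_nat (Suc r) * w / of_real t) - 1)))"

end

theory Submission
  imports Defs
begin


definition BR :: "real fps" where "BR = fps_X / (fps_exp 1 - 1)"

lemma BR_nth: "fps_nth BR n = bernoulli n / fact n"
  by (simp add: bernoulli_def BR_def)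

lemma expm1_ne: "(fps_exp 1 - 1 :: 'a::field_char_0 fps) \<noteq> 0"
proof
  assume "(fps_exp 1 - 1 :: 'a fps) = 0"
  hence "fps_nth (fps_exp 1 - 1 :: 'a fps) 1 = 0" by simp
  thus False by simp
qed

lemma expm1_subdeg: "subdegree (fps_exp 1 - 1 :: 'a::field_char_0 fps) = 1"
  by (rule subdegreeI) auto

lemma BR_eq: "BR * (fps_exp 1 - 1) = fps_X"
  unfolding BR_def
  by (intro fps_times_divide_eq expm1_ne) (simp only: expm1_subdeg, simp)

lemma bern0: "bernoulli 0 = 1"
proof -
  have "fps_nth (BR * (fps_exp 1 - 1)) 1 = 1" by (simp add: BR_eq)
  thus ?thesis by (simp add: fps_mult_nth BR_nth)
qed

lemma bern1: "bernoulli 1 = -1/2"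
proof -
  have "fps_nth (BR * (fps_exp 1 - 1)) 2 = 0" by (simp add: BR_eq)
  thus ?thesis by (simp add: fps_mult_nth BR_nth numeral_2_eq_2 bern0)
qed


lemma bern1': "bernoulli (Suc 0) = -1/2" using bern1 by simp

definition BC :: "complex fps" where "BC = Abs_fps (\<lambda>n. of_real (bernoulli n / fact n))"

lemma BC_nth: "fps_nth BC n = of_real (bernoulli n / fact n)"
  by (simp add: BC_def)

lemma BC_eq: "BC * (fps_exp 1 - 1) = fps_X"
proof (rule fps_ext)
  fix n
  have "fps_nth (BC * (fps_exp 1 - 1)) n = of_real (fps_nth (BR * (fps_exp 1 - 1)) n)"
    by (simp add: fps_mult_nth BC_nth BR_nth of_real_sum) (intro sum.cong, auto)
  also have "\<dots> = fps_nth (fps_X :: complex fps) n" by (simp add: BR_eq)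
  finally show "fps_nth (BC * (fps_exp 1 - 1)) n = fps_nth fps_X n" .
qed

definition hB :: "complex \<Rightarrow> complex" where
  "hB x = (if x = 0 then 1 else x / (exp x - 1))"

lemma hB_exp: "hB has_fps_expansion BC"
proof -
  have "(\<lambda>x. if x = 0 then 1 else x / (exp x - 1)) has_fps_expansion (fps_X / (fps_exp 1 - 1 :: complex fps))"
  proof (rule has_fps_expansion_divide[where f="\<lambda>x. x" and g="\<lambda>x. exp x - 1"])
    show "(\<lambda>x. exp x - 1) has_fps_expansion (fps_exp 1 - 1 :: complex fps)"
      by (intro has_fps_expansion_diff has_fps_expansion_exp1 has_fps_expansion_1)
    show "(\<lambda>x::complex. x) has_fps_expansion fps_X" by (rule has_fps_expansion_fps_X)
    show "subdegree (fps_exp 1 - 1 :: complex fps) \<le> subdegree (fps_X :: complex fps)"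
      by (simp only: expm1_subdeg, simp)
    show "(fps_exp 1 - 1 :: complex fps) \<noteq> 0" by (rule expm1_ne)
    show "(1::complex) = fps_nth fps_X (subdegree (fps_exp 1 - 1 :: complex fps)) /
           fps_nth (fps_exp 1 - 1) (subdegree (fps_exp 1 - 1 :: complex fps))"
      by (simp only: expm1_subdeg, simp)
  qed
  moreover have "fps_X / (fps_exp 1 - 1) = BC"
  proof -
    have "fps_X / (fps_exp 1 - 1) * (fps_exp 1 - 1) = (fps_X :: complex fps)"
      by (intro fps_times_divide_eq expm1_ne) (simp only: expm1_subdeg, simp)
    hence "(fps_X / (fps_exp 1 - 1) - BC) * (fps_exp 1 - 1) = 0"
      using BC_eq by (metis diff_self left_diff_distrib)
    thus ?thesis using expm1_ne[where 'a=complex] by simp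
  qed
  ultimately show ?thesis by (simp add: hB_def[abs_def])
qed


lemma eval_fps_split:
  fixes F :: "complex fps"
  assumes "norm z < fps_conv_radius F"
  shows "eval_fps F z = (\<Sum>n\<le>L. fps_nth F n * z ^ n) + z ^ Suc L * eval_fps (fps_shift (Suc L) F) z"
proof -
  have s1: "(\<lambda>n. fps_nth F n * z ^ n) sums eval_fps F z" by (rule sums_eval_fps[OF assms])
  have "(\<lambda>n. fps_nth (fps_shift (Suc L) F) n * z ^ n) sums eval_fps (fps_shift (Suc L) F) z"
    by (rule sums_eval_fps) (simp add: assms)
  hence "(\<lambda>n. z ^ Suc L * (fps_nth (fps_shift (Suc L) F) n * z ^ n)) sums
          (z ^ Suc L * eval_fps (fps_shift (Suc L) F) z)" by (rule sums_mult)
  hence "(\<lambda>i. fps_nth F (i + Suc L) * z ^ (i + Suc L)) sums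
          (z ^ Suc L * eval_fps (fps_shift (Suc L) F) z)"
    by (simp add: power_add mult_ac)
  hence "(\<lambda>n. fps_nth F n * z ^ n) sums
          (z ^ Suc L * eval_fps (fps_shift (Suc L) F) z + (\<Sum>i<Suc L. fps_nth F i * z ^ i))"
    by (subst (asm) sums_iff_shift)
  from sums_unique2[OF s1 this] show ?thesis by (simp add: lessThan_Suc_atMost add_ac)
qed

lemma hB_rem: "\<exists>\<rho>>0. \<exists>M. \<forall>y. norm y < \<rho> \<longrightarrow>
   norm (hB y - (\<Sum>n\<le>L. fps_nth BC n * y ^ n)) \<le> M * norm y ^ Suc L"
proof -
  define S where "S = fps_shift (Suc L) BC"
  define M where "M = norm (eval_fps S 0) + 1"
  have R: "fps_conv_radius BC > 0" and ev1: "eventually (\<lambda>z. eval_fps BC z = hB z) (nhds 0)"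
    using hB_exp by (auto simp: has_fps_expansion_def)
  have ev2: "eventually (\<lambda>z. z \<in> eball 0 (fps_conv_radius BC)) (nhds (0::complex))"
    using R by (intro eventually_nhds_in_open) (auto simp: zero_ereal_def)
  have "isCont (eval_fps S) 0"
    using R by (intro continuous_eval_fps) (auto simp: S_def zero_ereal_def)
  hence "((eval_fps S) \<longlongrightarrow> eval_fps S 0) (nhds 0)"
    by (simp add: isCont_def tendsto_at_iff_tendsto_nhds)
  hence ev3: "eventually (\<lambda>z. dist (eval_fps S z) (eval_fps S 0) < 1) (nhds 0)"
    by (rule tendstoD) simp
  have "eventually (\<lambda>z. eval_fps BC z = hB z \<and> z \<in> eball 0 (fps_conv_radius BC) \<and>
            dist (eval_fps S z) (eval_fps S 0) < 1) (nhds 0)"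
    using ev1 ev2 ev3 by eventually_elim auto
  then obtain \<rho> where rho: "\<rho> > 0" and P: "\<And>z. dist z 0 < \<rho> \<Longrightarrow> eval_fps BC z = hB z \<and>
      z \<in> eball 0 (fps_conv_radius BC) \<and> dist (eval_fps S z) (eval_fps S 0) < 1"
    unfolding eventually_nhds_metric by blast
  have "\<forall>y. norm y < \<rho> \<longrightarrow> norm (hB y - (\<Sum>n\<le>L. fps_nth BC n * y ^ n)) \<le> M * norm y ^ Suc L"
  proof (intro allI impI)
    fix y :: complex assume y: "norm y < \<rho>"
    from P[of y] y have e: "eval_fps BC y = hB y" and inb: "norm y < fps_conv_radius BC"
      and d: "dist (eval_fps S y) (eval_fps S 0) < 1" by auto
    have "hB y - (\<Sum>n\<le>L. fps_nth BC n * y ^ n) = y ^ Suc L * eval_fps S y"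
      using eval_fps_split[OF inb, of L] e by (simp add: S_def)
    moreover have "norm (eval_fps S y) \<le> M"
      using d norm_triangle_ineq2[of "eval_fps S y" "eval_fps S 0"] by (simp add: M_def dist_norm)
    ultimately show "norm (hB y - (\<Sum>n\<le>L. fps_nth BC n * y ^ n)) \<le> M * norm y ^ Suc L"
      by (simp add: norm_mult norm_power mult_right_mono mult.commute)
  qed
  with rho show ?thesis by blast
qed


definition EE :: "complex \<Rightarrow> complex" where "EE x = 1 / (1 - exp (- x))"
definition cB :: "nat \<Rightarrow> complex" where "cB l = of_real (bernoulli l / fact l)"
definition PL :: "nat \<Rightarrow> complex \<Rightarrow> complex" where
  "PL L x = 1 / x + 1/2 + (\<Sum>l=2..L. cB l * x ^ (l - 1))"

lemma sum_head2: "(L::nat) \<ge> 1 \<Longrightarrow> (\<Sum>n\<le>L. f n) = f 0 + f 1 + (\<Sum>n=2..L. (f n :: 'a::comm_monoid_add))"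
  by (simp add: atMost_atLeast0 sum.atLeast_Suc_atMost numeral_2_eq_2 add.assoc)

lemma EE_near:
  assumes "L \<ge> 1" "x \<noteq> 0" "Re x < 0"
  shows "x * (EE x - PL L x) = hB x - (\<Sum>n\<le>L. fps_nth BC n * x ^ n)"
proof -
  have "norm (exp x) < 1" using assms by (simp add: norm_exp_eq_Re)
  hence ex: "exp x \<noteq> 1" by (metis norm_one less_irrefl)
  have e1: "x * EE x = x / (exp x - 1) + x"
    using ex by (simp add: EE_def exp_minus field_simps)
  have s: "x * (\<Sum>l=2..L. cB l * x ^ (l - 1)) = (\<Sum>l=2..L. cB l * x ^ l)"
    unfolding sum_distrib_left
  proof (rule sum.cong)
    fix l assume "l \<in> {2..L}"
    hence "l = Suc (l - 1)" by auto
    hence "x * x ^ (l - 1) = x ^ l" by (metis power_Suc)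
    thus "x * (cB l * x ^ (l - 1)) = cB l * x ^ l" by (simp add: mult_ac)
  qed simp
  have p: "x * PL L x = 1 + x / 2 + (\<Sum>l=2..L. cB l * x ^ l)"
    using assms(2) s by (simp add: PL_def distrib_left)
  have q: "(\<Sum>n\<le>L. fps_nth BC n * x ^ n) = 1 - x / 2 + (\<Sum>l=2..L. cB l * x ^ l)"
    using assms(1) by (simp add: sum_head2 BC_nth cB_def bern0 bern1')
  show ?thesis using e1 p q assms(2) by (simp add: right_diff_distrib hB_def)
qed


lemma aux_eq: "(B::real) * (u / p) + (\<Sum>l\<in>S. f l * u) = (B / p + (\<Sum>l\<in>S. f l)) * u"
  by (simp add: sum_distrib_right distrib_right)

lemma EE_far:
  assumes "a > 0" "\<rho> > 0" "norm x \<ge> \<rho>" "Re x \<le> - a * norm x"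
  shows "norm (EE x - PL L x) \<le>
     ((1 / (exp (a * \<rho>) - 1) + 1 / \<rho> + 1/2) / \<rho> ^ L
      + (\<Sum>l=2..L. norm (cB l) / \<rho> ^ (L + 1 - l))) * norm x ^ L"
proof -
  define t where "t = norm x"
  have t: "t \<ge> \<rho>" "t > 0" using assms by (auto simp: t_def)
  define A0 where "A0 = 1 / (exp (a * \<rho>) - 1)"
  have ea: "exp (a * \<rho>) > 1" using assms by simp
  have "a * \<rho> \<le> a * norm x" using assms by (intro mult_left_mono) auto
  hence "a * \<rho> \<le> - Re x" using assms(4) by linarith
  hence "exp (a * \<rho>) \<le> exp (- Re x)" by simp
  also have "exp (- Re x) = norm (exp (- x))" by (simp add: norm_exp_eq_Re)
  finally have "exp (a * \<rho>) - 1 \<le> norm (exp (- x)) - norm (1::complex)" by simp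
  also have "\<dots> \<le> norm (1 - exp (- x))"
    using norm_triangle_ineq2[of "exp (-x)" 1] by (simp add: norm_minus_commute)
  finally have d: "exp (a * \<rho>) - 1 \<le> norm (1 - exp (- x))" .
  have n1: "norm (EE x) \<le> A0"
  proof -
    have "norm (EE x) = 1 / norm (1 - exp (- x))" by (simp add: EE_def norm_divide)
    also have "\<dots> \<le> A0" unfolding A0_def
    proof (rule divide_left_mono[OF d])
      have "0 < exp (a * \<rho>) - 1" using ea by simp
      moreover hence "0 < norm (1 - exp (- x))" using d by linarith
      ultimately show "0 < norm (1 - exp (- x)) * (exp (a * \<rho>) - 1)" by simp
    qed simp
    finally show ?thesis .
  qed
  have n2: "norm (PL L x) \<le> 1 / \<rho> + 1/2 + (\<Sum>l=2..L. norm (cB l) * t ^ (l - 1))"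
  proof -
    have a1: "norm (PL L x) \<le> norm (1 / x + 1/2) + norm (\<Sum>l=2..L. cB l * x ^ (l - 1))"
      unfolding PL_def by (rule norm_triangle_ineq)
    have a2: "norm (1 / x + 1/2) \<le> norm (1 / x) + norm (1/2::complex)" by (rule norm_triangle_ineq)
    have "norm (1 / x) = 1 / t" by (simp add: t_def norm_divide)
    also have "\<dots> \<le> 1 / \<rho>" by (rule divide_left_mono) (use t assms(2) in auto)
    finally have a3: "norm (1 / x) \<le> 1 / \<rho>" .
    have a4: "norm (\<Sum>l=2..L. cB l * x ^ (l - 1)) \<le> (\<Sum>l=2..L. norm (cB l) * t ^ (l - 1))"
      by (rule order_trans[OF norm_sum]) (simp add: norm_mult norm_power t_def)
    have a5: "norm (1/2::complex) = 1/2" by simp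
    show ?thesis using a1 a2 a3 a4 a5 by linarith
  qed
  have rp: "\<rho> ^ k > 0" for k using assms(2) by simp
  have r1: "1 \<le> t ^ L / \<rho> ^ L"
  proof -
    have "\<rho> ^ L \<le> t ^ L" by (rule power_mono) (use t assms(2) in auto)
    thus ?thesis using rp[of L] by (simp add: le_divide_eq_1_pos)
  qed
  have r2: "norm (cB l) * t ^ (l - 1) \<le> norm (cB l) / \<rho> ^ (L + 1 - l) * t ^ L"
    if "l \<in> {2..L}" for l
  proof -
    have tl: "t ^ L = t ^ (l - 1) * t ^ (L + 1 - l)"
      using that by (simp add: power_add[symmetric])
    have "\<rho> ^ (L + 1 - l) \<le> t ^ (L + 1 - l)" by (rule power_mono) (use t assms(2) in auto)
    hence "t ^ (l - 1) * \<rho> ^ (L + 1 - l) \<le> t ^ L"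
      unfolding tl by (rule mult_left_mono) (use t in auto)
    hence "t ^ (l - 1) \<le> t ^ L / \<rho> ^ (L + 1 - l)"
      by (subst pos_le_divide_eq[OF rp])
    hence "norm (cB l) * t ^ (l - 1) \<le> norm (cB l) * (t ^ L / \<rho> ^ (L + 1 - l))"
      by (rule mult_left_mono) simp
    thus ?thesis by simp
  qed
  have "norm (EE x - PL L x) \<le> norm (EE x) + norm (PL L x)" by (rule norm_triangle_ineq4)
  also have "\<dots> \<le> A0 + (1 / \<rho> + 1/2) + (\<Sum>l=2..L. norm (cB l) * t ^ (l - 1))"
    using n1 n2 by simp
  also have "\<dots> \<le> (A0 + 1 / \<rho> + 1/2) * (t ^ L / \<rho> ^ L)
                 + (\<Sum>l=2..L. norm (cB l) / \<rho> ^ (L + 1 - l) * t ^ L)"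
  proof (rule add_mono)
    have "0 \<le> A0" using ea by (simp add: A0_def)
    moreover have "0 \<le> 1 / \<rho>" using assms(2) by simp
    ultimately have "0 \<le> A0 + 1 / \<rho> + 1/2" by linarith
    thus "A0 + (1 / \<rho> + 1/2) \<le> (A0 + 1 / \<rho> + 1/2) * (t ^ L / \<rho> ^ L)"
      using mult_left_mono[OF r1] by (simp add: add.assoc)
    show "(\<Sum>l=2..L. norm (cB l) * t ^ (l - 1)) \<le> (\<Sum>l=2..L. norm (cB l) / \<rho> ^ (L + 1 - l) * t ^ L)"
      by (rule sum_mono) (rule r2)
  qed
  also have "\<dots> = ((A0 + 1 / \<rho> + 1/2) / \<rho> ^ L + (\<Sum>l=2..L. norm (cB l) / \<rho> ^ (L + 1 - l))) * t ^ L"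
    by (rule aux_eq)
  finally show ?thesis by (simp add: A0_def t_def)
qed


lemma pow_le_exp: assumes "(x::real) \<ge> 0" shows "x ^ k / fact k \<le> exp x"
proof -
  have s: "(\<lambda>n. x ^ n / fact n) sums exp x"
    using exp_converges[of x] by (simp add: divide_inverse mult.commute)
  have "sum (\<lambda>n. x ^ n / fact n) {k} \<le> suminf (\<lambda>n. x ^ n / fact n)"
    by (rule sum_le_suminf) (use s assms in \<open>auto simp: sums_iff\<close>)
  thus ?thesis using s by (simp add: sums_iff)
qed

lemma summable_poly_exp:
  assumes "\<delta> > 0"
  shows "summable (\<lambda>r. exp (- \<delta>) ^ Suc r * real (Suc r) ^ k)"
proof (rule summable_comparison_test')
  define c where "c = fact k / (\<delta> / 2) ^ k"
  show "summable (\<lambda>r. c * exp (- \<delta> / 2) ^ Suc r)"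
    using assms by (intro summable_mult) (simp add: summable_Suc_iff summable_geometric)
  fix r :: nat
  define t where "t = real (Suc r)"
  have t0: "t \<ge> 0" by (simp add: t_def)
  have "(\<delta> / 2 * t) ^ k / fact k \<le> exp (\<delta> / 2 * t)"
    by (rule pow_le_exp) (use assms t0 in simp)
  hence "t ^ k \<le> c * exp (\<delta> / 2 * t)"
    using assms by (simp add: c_def power_mult_distrib field_simps)
  hence "exp (- \<delta> * t) * t ^ k \<le> exp (- \<delta> * t) * (c * exp (\<delta> / 2 * t))"
    by (rule mult_left_mono) simp
  also have "\<dots> = c * exp (- \<delta> / 2 * t)"
  proof -
    have "exp (- \<delta> * t) * exp (\<delta> / 2 * t) = exp (- \<delta> / 2 * t)"
      by (subst mult_exp_exp) (simp add: field_simps)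
    thus ?thesis by (simp add: mult_ac)
  qed
  finally have "exp (- \<delta> * t) * t ^ k \<le> c * exp (- \<delta> / 2 * t)" .
  moreover have "exp (- \<delta>) ^ Suc r = exp (- \<delta> * t)" "exp (- \<delta> / 2) ^ Suc r = exp (- \<delta> / 2 * t)"
    unfolding t_def by (subst exp_of_nat_mult[symmetric], simp only: mult.commute)+
  ultimately show "norm (exp (- \<delta>) ^ Suc r * real (Suc r) ^ k) \<le> c * exp (- \<delta> / 2) ^ Suc r"
    by (simp add: t_def)
qed


lemma EE_cone:
  assumes "a > 0" "L \<ge> 1"
  shows "\<exists>K\<ge>0. \<forall>x. x \<noteq> 0 \<longrightarrow> Re x \<le> - a * norm x \<longrightarrow> norm (EE x - PL L x) \<le> K * norm x ^ L"
proof -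
  obtain \<rho> M where rho: "\<rho> > 0" and M: "\<And>y. norm y < \<rho> \<Longrightarrow>
     norm (hB y - (\<Sum>n\<le>L. fps_nth BC n * y ^ n)) \<le> M * norm y ^ Suc L"
    using hB_rem[of L] by blast
  define K2 where "K2 = ((1 / (exp (a * \<rho>) - 1) + 1 / \<rho> + 1/2) / \<rho> ^ L
      + (\<Sum>l=2..L. norm (cB l) / \<rho> ^ (L + 1 - l)))"
  define K where "K = max 0 (max M K2)"
  have "\<forall>x. x \<noteq> 0 \<longrightarrow> Re x \<le> - a * norm x \<longrightarrow> norm (EE x - PL L x) \<le> K * norm x ^ L"
  proof (intro allI impI)
    fix x :: complex assume x0: "x \<noteq> 0" and cone: "Re x \<le> - a * norm x"
    have np: "norm x > 0" using x0 by simp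
    have "a * norm x > 0" using assms np by simp
    hence re: "Re x < 0" using cone by linarith
    have pw: "norm x ^ L \<ge> 0" by simp
    show "norm (EE x - PL L x) \<le> K * norm x ^ L"
    proof (cases "norm x < \<rho>")
      case True
      have "norm x * norm (EE x - PL L x) = norm (x * (EE x - PL L x))" by (simp add: norm_mult)
      also have "\<dots> \<le> M * norm x ^ Suc L" unfolding EE_near[OF assms(2) x0 re] by (rule M[OF True])
      also have "\<dots> = norm x * (M * norm x ^ L)" by (simp add: mult_ac)
      finally have "norm (EE x - PL L x) \<le> M * norm x ^ L"
        using np by (simp add: mult_le_cancel_left_pos)
      also have "\<dots> \<le> K * norm x ^ L" by (rule mult_right_mono[OF _ pw]) (simp add: K_def)
      finally show ?thesis .
    next
      case False
      hence "norm (EE x - PL L x) \<le> K2 * norm x ^ L"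
        unfolding K2_def by (intro EE_far assms(1) rho cone) simp
      also have "\<dots> \<le> K * norm x ^ L" by (rule mult_right_mono[OF _ pw]) (simp add: K_def)
      finally show ?thesis .
    qed
  qed
  moreover have "K \<ge> 0" by (simp add: K_def)
  ultimately show ?thesis by blast
qed


lemma powi_neg: "l \<ge> 2 \<Longrightarrow> (w::complex) powi (2 - int l) = inverse (w ^ (l - 2))"
proof -
  assume "l \<ge> 2"
  hence "2 - int l = - int (l - 2)" by simp
  thus ?thesis by (simp only: power_int_minus power_int_of_nat)
qed
lemma summable_u:
  fixes u :: complex
  assumes "\<delta> > 0" "norm u \<le> exp (- \<delta>)"
  shows "summable (\<lambda>r. u ^ Suc r * of_nat (Suc r) ^ k)"
proof (rule summable_comparison_test'[OF summable_poly_exp[OF assms(1), of k]])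
  fix r :: nat
  have "norm u ^ Suc r \<le> exp (- \<delta>) ^ Suc r" by (rule power_mono[OF assms(2)]) simp
  hence "norm u ^ Suc r * real (Suc r) ^ k \<le> exp (- \<delta>) ^ Suc r * real (Suc r) ^ k"
    by (rule mult_right_mono) simp
  moreover have "norm (u ^ Suc r * (of_nat (Suc r) :: complex) ^ k) = norm u ^ Suc r * real (Suc r) ^ k"
    by (simp only: norm_mult norm_power norm_of_nat)
  ultimately show "norm (u ^ Suc r * of_nat (Suc r) ^ k) \<le> exp (- \<delta>) ^ Suc r * real (Suc r) ^ k"
    by simp
qed
lemma log_sums:
  fixes u :: complex
  assumes "norm u < 1"
  shows "(\<lambda>r. u ^ Suc r / of_nat (Suc r)) sums (- Ln (1 - u))"
proof -
  have "(\<lambda>n. - ((- (- u)) ^ n) / of_nat n) sums ln (1 + - u)"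
    by (rule Ln_series') (use assms in simp)
  moreover have "(\<lambda>n. - ((- (- u)) ^ n) / of_nat n) = (\<lambda>n. - (u ^ n) / of_nat n)" by simp
  moreover have "ln (1 + - u) = Ln (1 - u)" by simp
  ultimately have "(\<lambda>n. - (u ^ n) / of_nat n) sums (Ln (1 - u) + - (u ^ 0) / of_nat 0)" by simp
  hence "(\<lambda>n. - (u ^ Suc n) / of_nat (Suc n)) sums Ln (1 - u)"
    by (rule sums_Suc_iff[THEN iffD2])
  from sums_minus[OF this] show ?thesis by simp
qed

lemma summable_geo_u:
  fixes u :: complex
  assumes "norm u < 1"
  shows "summable (\<lambda>r. norm u ^ Suc r)"
  using assms by (simp add: summable_Suc_iff summable_geometric)



lemma aux_ring: "(m::complex) \<noteq> 0 \<Longrightarrow> U / m * (c * (m * p * w)) = c * w * (U * p)"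
  by (simp add: field_simps)

lemma term_id:
  fixes z :: complex and N r :: nat
  assumes "N \<ge> 1" "z \<noteq> 0" "L \<ge> 1"
  defines "u \<equiv> exp z" and "m \<equiv> (of_nat (Suc r) :: complex)" and "n \<equiv> (of_nat N :: complex)"
  defines "x \<equiv> of_real (real (Suc r) / real N) * z"
  shows "- (exp (- of_nat (Suc r) * (- z)) /
            (of_nat (Suc r) * (exp (of_nat (Suc r) * (- z) / of_real (real N)) - 1)))
       = n / z * (u ^ Suc r / m powi 2) + 1/2 * (u ^ Suc r / m)
         + (\<Sum>l=2..L. cB l * (z / n) ^ (l - 1) * (u ^ Suc r / m powi (2 - int l)))
         + u ^ Suc r / m * (EE x - PL L x)"
proof -
  have m0: "m \<noteq> 0" unfolding m_def by (simp only: of_nat_eq_0_iff)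
  have n0: "n \<noteq> 0" using assms(1) by (simp add: n_def)
  have xe: "x = m * z / n" by (simp add: x_def m_def n_def)
  have x0: "x \<noteq> 0" using m0 n0 assms(2) by (simp add: xe)
  have eu: "exp (- of_nat (Suc r) * (- z)) = u ^ Suc r"
  proof -
    have "- of_nat (Suc r) * (- z) = of_nat (Suc r) * z" by (simp only: mult_minus_left mult_minus_right minus_minus)
    thus ?thesis by (simp only: exp_of_nat_mult u_def)
  qed
  have ee: "exp (of_nat (Suc r) * (- z) / of_real (real N)) = exp (- x)"
    by (simp add: xe m_def n_def)
  have step1: "- (exp (- of_nat (Suc r) * (- z)) /
            (of_nat (Suc r) * (exp (of_nat (Suc r) * (- z) / of_real (real N)) - 1)))
         = u ^ Suc r / m * EE x"
  proof -
    have "- (exp (- of_nat (Suc r) * (- z)) /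
            (of_nat (Suc r) * (exp (of_nat (Suc r) * (- z) / of_real (real N)) - 1)))
          = - (u ^ Suc r / (m * (exp (- x) - 1)))" by (simp only: eu ee m_def)
    also have "\<dots> = u ^ Suc r / m * EE x"
    proof -
      have h: "m * (1 - exp (- x)) = - (m * (exp (- x) - 1))" by (simp add: algebra_simps)
      show ?thesis by (simp add: EE_def h)
    qed
    finally show ?thesis .
  qed
  have a1: "u ^ Suc r / m * (1 / x) = n / z * (u ^ Suc r / m powi 2)"
    using m0 n0 assms(2) by (simp add: xe power2_eq_square field_simps)
  have a2: "u ^ Suc r / m * (cB l * x ^ (l - 1)) = cB l * (z / n) ^ (l - 1) * (u ^ Suc r / m powi (2 - int l))"
    if "l \<in> {2..L}" for l
  proof -
    from that have l2: "l \<ge> 2" by simp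
    have "x ^ (l - 1) = m ^ (l - 1) * (z / n) ^ (l - 1)"
      by (simp add: xe power_mult_distrib[symmetric])
    also have "m ^ (l - 1) = m * m ^ (l - 2)"
      using l2 by (metis Suc_diff_Suc Suc_1 diff_Suc_eq_diff_pred power_Suc Suc_le_eq)
    finally have "x ^ (l - 1) = m * m ^ (l - 2) * (z / n) ^ (l - 1)" .
    moreover have "u ^ Suc r / m powi (2 - int l) = u ^ Suc r * m ^ (l - 2)"
      using l2 by (simp add: powi_neg divide_inverse)
    ultimately show ?thesis using m0 aux_ring[of m "u ^ Suc r" "cB l" "m ^ (l - 2)" "(z / n) ^ (l - 1)"]
      by simp
  qed
  have step2: "u ^ Suc r / m * PL L x = n / z * (u ^ Suc r / m powi 2) + 1/2 * (u ^ Suc r / m)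
         + (\<Sum>l=2..L. cB l * (z / n) ^ (l - 1) * (u ^ Suc r / m powi (2 - int l)))"
  proof -
    have "u ^ Suc r / m * PL L x = u ^ Suc r / m * (1 / x) + 1/2 * (u ^ Suc r / m)
          + (\<Sum>l=2..L. u ^ Suc r / m * (cB l * x ^ (l - 1)))"
      by (simp add: PL_def distrib_left sum_distrib_left)
    also have "(\<Sum>l=2..L. u ^ Suc r / m * (cB l * x ^ (l - 1)))
             = (\<Sum>l=2..L. cB l * (z / n) ^ (l - 1) * (u ^ Suc r / m powi (2 - int l)))"
      by (rule sum.cong[OF refl a2])
    finally show ?thesis by (simp only: a1)
  qed
  show ?thesis unfolding step1 using step2 by (simp add: right_diff_distrib)
qed


lemma aux_real: "(s::real) > 0 \<Longrightarrow> NL > 0 \<Longrightarrow> tL = sL / NL \<Longrightarrow> sL = s * sk \<Longrightarrow>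
   Q / s * (K * (tL * CL)) = K * CL / NL * (Q * sk)"
  by (simp add: field_simps)

lemma R_bound:
  fixes z :: complex and N r :: nat
  assumes "\<delta> > 0" "C > 0" "L \<ge> 1" "N \<ge> 1" "Re z \<le> - \<delta>" "cmod z \<le> C" "K \<ge> 0"
   and Kc: "\<forall>x. x \<noteq> 0 \<longrightarrow> Re x \<le> - (\<delta> / C) * norm x \<longrightarrow> norm (EE x - PL L x) \<le> K * norm x ^ L"
  defines "x \<equiv> of_real (real (Suc r) / real N) * z"
  shows "norm (exp z ^ Suc r / of_nat (Suc r) * (EE x - PL L x))
     \<le> K * C ^ L / real N ^ L * (exp (- \<delta>) ^ Suc r * real (Suc r) ^ (L - 1))"
proof -
  define t where "t = real (Suc r) / real N"
  define s where "s = real (Suc r)"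
  have t0: "t > 0" using assms(4) by (simp add: t_def)
  have z0: "z \<noteq> 0" using assms(1,5) by auto
  have xt: "x = of_real t * z" by (simp only: x_def t_def)
  have nx: "norm x = t * norm z" using t0 by (simp add: xt norm_mult)
  have rx: "Re x = t * Re z" by (simp add: xt)
  have x0: "x \<noteq> 0" using t0 z0 by (simp add: xt)
  have "\<delta> / C * norm z \<le> \<delta> / C * C" using assms(1,2,6) by (intro mult_left_mono) auto
  hence "\<delta> / C * norm z \<le> \<delta>" using assms(2) by simp
  hence "Re z \<le> - (\<delta> / C) * norm z" using assms(5) by linarith
  hence "t * Re z \<le> t * (- (\<delta> / C) * norm z)" using t0 by (intro mult_left_mono) auto
  hence cone: "Re x \<le> - (\<delta> / C) * norm x" by (simp add: rx nx mult_ac)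
  have b1: "norm (EE x - PL L x) \<le> K * (t * C) ^ L"
  proof -
    have "norm (EE x - PL L x) \<le> K * norm x ^ L" using Kc x0 cone by blast
    also have "norm x ^ L \<le> (t * C) ^ L" unfolding nx
      by (rule power_mono) (use t0 assms(6) in \<open>auto intro: mult_left_mono\<close>)
    hence "K * norm x ^ L \<le> K * (t * C) ^ L" using assms(7) by (rule mult_left_mono)
    finally show ?thesis .
  qed
  have b2: "norm (exp z ^ Suc r) \<le> exp (- \<delta>) ^ Suc r"
    unfolding norm_power by (rule power_mono) (use assms(5) in \<open>auto simp: norm_exp_eq_Re\<close>)
  have "norm (exp z ^ Suc r / of_nat (Suc r) * (EE x - PL L x))
        = norm (exp z ^ Suc r) / s * norm (EE x - PL L x)"
    by (simp add: norm_mult norm_divide s_def del: of_nat_Suc)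
  also have "\<dots> \<le> exp (- \<delta>) ^ Suc r / s * (K * (t * C) ^ L)"
    by (intro mult_mono divide_right_mono b1 b2) (auto simp: s_def)
  also have "\<dots> = K * C ^ L / real N ^ L * (exp (- \<delta>) ^ Suc r * s ^ (L - 1))"
  proof -
    have sL: "s ^ L = s * s ^ (L - 1)" using assms(3) by (cases L) auto
    have tL: "t ^ L = s ^ L / real N ^ L" by (simp add: t_def s_def power_divide)
    have "s > 0" "real N ^ L > 0" using assms(4) by (auto simp: s_def)
    from aux_real[OF this tL sL] show ?thesis by (simp only: power_mult_distrib)
  qed
  finally show ?thesis by (simp add: s_def)
qed


lemma main_fixed:
  fixes z :: complex and N :: nat
  assumes "\<delta> > 0" "C > 0" "L \<ge> 1" "N \<ge> 1" "Re z \<le> - \<delta>" "cmod z \<le> C" "K \<ge> 0"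
   and Kc: "\<forall>x. x \<noteq> 0 \<longrightarrow> Re x \<le> - (\<delta> / C) * norm x \<longrightarrow> norm (EE x - PL L x) \<le> K * norm x ^ L"
  shows "cmod (- chi (- z) (real N)
          - (of_nat N / z * polylog 2 (exp z)
             - Ln (1 - exp z) / 2
             + (\<Sum>l=2..L. of_real (bernoulli l / fact l) * (z / of_nat N) ^ (l - 1)
                            * polylog (2 - int l) (exp z))))
      \<le> K * C ^ L / real N ^ L * (\<Sum>r. exp (- \<delta>) ^ Suc r * real (Suc r) ^ (L - 1))"
proof -
  define u where "u = exp z"
  define n where "n = (of_nat N :: complex)"
  define m where "m = (\<lambda>r. of_nat (Suc r) :: complex)"
  define x where "x = (\<lambda>r. of_real (real (Suc r) / real N) * z)"
  define T where "T = (\<lambda>r. exp (- of_nat (Suc r) * (- z)) /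
            (of_nat (Suc r) * (exp (of_nat (Suc r) * (- z) / of_real (real N)) - 1)))"
  define A where "A = (\<lambda>r. n / z * (u ^ Suc r / m r powi 2))"
  define B where "B = (\<lambda>r. 1/2 * (u ^ Suc r / m r))"
  define D where "D = (\<lambda>r. \<Sum>l=2..L. cB l * (z / n) ^ (l - 1) * (u ^ Suc r / m r powi (2 - int l)))"
  define R where "R = (\<lambda>r. u ^ Suc r / m r * (EE (x r) - PL L (x r)))"
  define Kc' where "Kc' = K * C ^ L / real N ^ L"
  define g where "g = (\<lambda>r. exp (- \<delta>) ^ Suc r * real (Suc r) ^ (L - 1))"
  have z0: "z \<noteq> 0" using assms(1,5) by auto
  have nu: "norm u \<le> exp (- \<delta>)" using assms(5) by (simp add: u_def norm_exp_eq_Re)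
  have nu1: "norm u < 1" using nu assms(1) by (meson exp_less_one_iff le_less_trans neg_less_0_iff_less)
  have id: "- T r = A r + B r + D r + R r" for r
    unfolding T_def A_def B_def D_def R_def m_def x_def n_def u_def
    by (rule term_id[OF assms(4) z0 assms(3)])
  have sA: "A sums (n / z * polylog 2 u)"
  proof -
    have "summable (\<lambda>r. u ^ Suc r / m r powi 2)"
    proof (rule summable_comparison_test'[OF summable_geo_u[OF nu1]])
      fix r :: nat
      have "1 \<le> norm (m r) ^ 2" by (simp add: m_def del: of_nat_Suc)
      hence "norm (u ^ Suc r) / norm (m r) ^ 2 \<le> norm (u ^ Suc r)"
        by (simp add: divide_le_eq_1 divide_simps mult_le_cancel_left1)
      thus "norm (u ^ Suc r / m r powi 2) \<le> norm u ^ Suc r"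
        by (simp add: norm_divide norm_power norm_mult del: of_nat_Suc)
    qed
    hence "(\<lambda>r. u ^ Suc r / m r powi 2) sums polylog 2 u"
      by (simp add: polylog_def m_def summable_sums del: of_nat_Suc)
    thus ?thesis unfolding A_def by (rule sums_mult)
  qed
  have sB: "B sums (- Ln (1 - u) / 2)"
    using sums_mult[OF log_sums[OF nu1], of "1/2"] by (simp add: B_def m_def)
  have sD: "D sums (\<Sum>l=2..L. cB l * (z / n) ^ (l - 1) * polylog (2 - int l) u)"
    unfolding D_def
  proof (rule sums_sum)
    fix l assume l: "l \<in> {2..L}"
    have "(\<lambda>r. u ^ Suc r / m r powi (2 - int l)) = (\<lambda>r. u ^ Suc r * of_nat (Suc r) ^ (l - 2))"
      using l by (simp add: m_def powi_neg divide_inverse del: of_nat_Suc)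
    hence "summable (\<lambda>r. u ^ Suc r / m r powi (2 - int l))"
      using summable_u[OF assms(1) nu, of "l - 2"] by simp
    hence "(\<lambda>r. u ^ Suc r / m r powi (2 - int l)) sums polylog (2 - int l) u"
      by (simp add: polylog_def m_def summable_sums del: of_nat_Suc)
    thus "(\<lambda>r. cB l * (z / n) ^ (l - 1) * (u ^ Suc r / m r powi (2 - int l))) sums
            (cB l * (z / n) ^ (l - 1) * polylog (2 - int l) u)"
      by (rule sums_mult)
  qed
  have Rb: "norm (R r) \<le> Kc' * g r" for r
    unfolding R_def Kc'_def g_def m_def x_def u_def
    by (rule R_bound[OF assms(1-7) Kc])
  have sg: "summable g" unfolding g_def by (rule summable_poly_exp[OF assms(1)])
  have sKg: "summable (\<lambda>r. Kc' * g r)" by (rule summable_mult[OF sg])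
  have sR: "summable R" by (rule summable_comparison_test'[OF sKg Rb])
  have snR: "summable (\<lambda>r. norm (R r))" by (rule summable_comparison_test'[OF sKg]) (simp add: Rb)
  have "(\<lambda>r. A r + B r + D r + R r) sums
        (n / z * polylog 2 u + - Ln (1 - u) / 2 + (\<Sum>l=2..L. cB l * (z / n) ^ (l - 1) * polylog (2 - int l) u) + suminf R)"
    by (intro sums_add sA sB sD summable_sums[OF sR])
  hence "(\<lambda>r. - T r) sums
        (n / z * polylog 2 u + - Ln (1 - u) / 2 + (\<Sum>l=2..L. cB l * (z / n) ^ (l - 1) * polylog (2 - int l) u) + suminf R)"
    by (simp only: id)
  hence "T sums - (n / z * polylog 2 u + - Ln (1 - u) / 2 + (\<Sum>l=2..L. cB l * (z / n) ^ (l - 1) * polylog (2 - int l) u) + suminf R)"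
    using sums_minus by fastforce
  hence chi_eq: "chi (- z) (real N) = - (n / z * polylog 2 u + - Ln (1 - u) / 2 + (\<Sum>l=2..L. cB l * (z / n) ^ (l - 1) * polylog (2 - int l) u) + suminf R)"
    unfolding chi_def T_def by (rule sums_unique[symmetric])
  have "- chi (- z) (real N)
          - (of_nat N / z * polylog 2 (exp z)
             - Ln (1 - exp z) / 2
             + (\<Sum>l=2..L. of_real (bernoulli l / fact l) * (z / of_nat N) ^ (l - 1)
                            * polylog (2 - int l) (exp z))) = suminf R"
    unfolding chi_eq by (simp add: u_def n_def cB_def)
  hence "cmod (- chi (- z) (real N)
          - (of_nat N / z * polylog 2 (exp z)
             - Ln (1 - exp z) / 2
             + (\<Sum>l=2..L. of_real (bernoulli l / fact l) * (z / of_nat N) ^ (l - 1)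
                            * polylog (2 - int l) (exp z)))) = norm (suminf R)" by simp
  also have "\<dots> \<le> (\<Sum>r. norm (R r))" by (rule summable_norm[OF snR])
  also have "\<dots> \<le> (\<Sum>r. Kc' * g r)" by (rule suminf_le[OF Rb snR sKg])
  also have "\<dots> = Kc' * suminf g" by (rule suminf_mult[OF sg])
  finally show ?thesis by (simp add: Kc'_def g_def)
qed


theorem proposition2p4:
  fixes L :: nat and \<delta> C :: real
  assumes "L \<ge> 1" and "\<delta> > 0" and "C > 0"
  shows "\<exists>K::real. \<forall>(N::nat) (z::complex). N \<ge> 1 \<longrightarrow> Re z \<le> - \<delta> \<longrightarrow> cmod z \<le> C \<longrightarrow>
    cmod (- chi (- z) (real N)
          - (of_nat N / z * polylog 2 (exp z)
             - Ln (1 - exp z) / 2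
             + (\<Sum>l=2..L. of_real (bernoulli l / fact l) * (z / of_nat N) ^ (l - 1)
                            * polylog (2 - int l) (exp z))))
      \<le> K / real N ^ L"
proof -
  have "\<delta> / C > 0" using assms by simp
  then obtain K where K0: "K \<ge> 0" and Kc: "\<forall>x. x \<noteq> 0 \<longrightarrow> Re x \<le> - (\<delta> / C) * norm x \<longrightarrow>
      norm (EE x - PL L x) \<le> K * norm x ^ L"
    using EE_cone[of "\<delta> / C" L] assms(1) by blast
  define S0 where "S0 = (\<Sum>r. exp (- \<delta>) ^ Suc r * real (Suc r) ^ (L - 1))"
  show ?thesis
  proof (intro exI allI impI)
    fix N :: nat and z :: complex
    assume "N \<ge> 1" "Re z \<le> - \<delta>" "cmod z \<le> C"
    from main_fixed[OF assms(2,3,1) this K0 Kc]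
    show "cmod (- chi (- z) (real N)
          - (of_nat N / z * polylog 2 (exp z)
             - Ln (1 - exp z) / 2
             + (\<Sum>l=2..L. of_real (bernoulli l / fact l) * (z / of_nat N) ^ (l - 1)
                            * polylog (2 - int l) (exp z))))
      \<le> K * C ^ L * S0 / real N ^ L"
      by (simp add: S0_def)
  qed
qed

end
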